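(* Let $S_0=\sum_{k=0}^\infty \frac{1}{(3k+1)(k+1)}=\frac{\pi\sqrt3}{12}+\frac34\log 3$. Then \begin{align*} &\sum_{n=0}^\infty \frac{9n+7}{(n+1)(3n+1)}\,\frac{(\frac53)_n}{(\frac32)_n}\,\frac{1}{4^n}=6S_0,\\ &\sum_{n=0}^\infty \frac{9n+5}{n+1}\,\frac{(\frac13)_n^2}{(\frac53)_n(\frac76)_n}\,\frac{1}{4^n}=4S_0,\\ &\sum_{n=0}^\infty (189n^2+222n+61)\,\frac{(\frac13)_n^2(1)_n}{(\frac76)_n(\frac32)_n^2}\,\frac{1}{64^n}=48S_0,\\ &\sum_{n=0}^\infty \frac{30n^2+35n+11}{(1+2n)(1+n)}\,\frac{(\frac13)_n}{(\frac76)_n}\,\frac{1}{(-4)^n}=8S_0,\\ &\sum_{n=0}^\infty \frac{90n^2+111n+31}{(1+6n)(2+3n)(1+n)}\,\frac{(\frac13)_n}{(\frac32)_n}\,\frac{1}{(-4)^n}=12S_0. \end{align*}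
   Context: $(x)_n=\Gamma(x+n)/\Gamma(x)=x(x+1)\cdots(x+n-1)$ denotes the rising factorial (Pochhammer symbol). *)

theory Defs
  imports Complex_Main
begin

end

theory Submission
  imports Defs
begin


definition hh :: "real \<Rightarrow> real" where
  "hh t = ln (1 + t + t^2) / 2 + arctan ((2*t+1) / sqrt 3) / sqrt 3"

lemma Qpos: "0 < 1 + t + (t::real)^2"
proof -
  have "0 \<le> (t + 1/2)^2" by simp
  then show ?thesis by (simp add: power2_eq_square algebra_simps)
qed

lemma hh_deriv: "(hh has_real_derivative (1 + t) / (1 + t + t^2)) (at t)"
proof -
  have q: "0 < 1 + t + t^2" by (rule Qpos)
  have s3: "sqrt 3 * sqrt 3 = (3::real)" by simp
  have d1: "((\<lambda>t. ln (1 + t + t^2) / 2) has_real_derivative ((1 + 2*t) / (1 + t + t^2)) / 2) (at t)"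
    using q by (auto intro!: derivative_eq_intros simp: field_simps)
  have d2: "((\<lambda>t. arctan ((2*t+1) / sqrt 3) / sqrt 3) has_real_derivative
        (inverse (1 + ((2*t+1)/sqrt 3)^2) * (2 / sqrt 3)) / sqrt 3) (at t)"
    by (auto intro!: derivative_eq_intros simp: field_simps)
  have "((1 + 2*t) / (1 + t + t^2)) / 2 + (inverse (1 + ((2*t+1)/sqrt 3)^2) * (2 / sqrt 3)) / sqrt 3
      = (1 + t) / (1 + t + t^2)"
  proof -
    have a: "((2*t+1)/sqrt 3)^2 = (2*t+1)^2 / 3" by (simp add: power_divide)
    have b: "1 + (2*t+1)^2/3 = 4 * (1 + t + t^2) / 3" by (simp add: field_simps power2_eq_square) 
    have c: "(2 / sqrt 3) / sqrt 3 = 2/(3::real)" using s3 by (simp add: field_simps)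
    have c': "\<And>x. x * (2 / sqrt 3) / sqrt 3 = x * (2/3::real)"
    proof -
      fix x :: real
      have "x * (2 / sqrt 3) / sqrt 3 = x * 2 / (sqrt 3 * sqrt 3)" by simp
      also have "\<dots> = x * (2/3)" using s3 by simp
      finally show "x * (2 / sqrt 3) / sqrt 3 = x * (2/3::real)" .
    qed
    have "inverse (1 + ((2*t+1)/sqrt 3)^2) * (2 / sqrt 3) / sqrt 3 = (3 / (4 * (1 + t + t^2))) * (2/3)"
      unfolding c' a b by (simp add: field_simps)
    note e = this
    show ?thesis unfolding e using q
      by (simp add: field_simps)
  qed
  with DERIV_add[OF d1 d2] show ?thesis unfolding hh_def by simp
qed

definition gg :: "nat \<Rightarrow> real \<Rightarrow> real" where
  "gg N t = (\<Sum>k<N. (3/2) * (t^(3*k+1) / real (3*k+1) - t^(3*k+3) / real (3*k+3)))"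

lemma pow_div_deriv:
  "((\<lambda>t. t^(Suc m) / real (Suc m)) has_real_derivative t^m) (at (t::real))"
proof -
  have "((\<lambda>t. t^(Suc m)) has_real_derivative real (Suc m) * t^m) (at t)"
    using DERIV_pow[of "Suc m" t] by simp
  then have "((\<lambda>t. t^(Suc m) / real (Suc m)) has_real_derivative real (Suc m) * t^m / real (Suc m)) (at t)"
    by (rule DERIV_cdivide)
  moreover have "real (Suc m) * t^m / real (Suc m) = t^m"
    by (simp del: of_nat_Suc)
  ultimately show ?thesis by (rule DERIV_cong)
qed

lemma gg_term_deriv:
  "((\<lambda>t. (3/2) * (t^(3*k+1) / real (3*k+1) - t^(3*k+3) / real (3*k+3))) has_real_derivative
     (3/2) * (t^(3*k) - t^(3*k+2))) (at (t::real))"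
proof -
  have d1: "((\<lambda>t. t^(3*k+1) / real (3*k+1)) has_real_derivative t^(3*k)) (at t)"
    using pow_div_deriv[of "3*k" t] by simp
  have d2: "((\<lambda>t. t^(3*k+3) / real (3*k+3)) has_real_derivative t^(3*k+2)) (at t)"
    using pow_div_deriv[of "3*k+2" t] by (simp add: numeral_eq_Suc)
  show ?thesis by (rule DERIV_cmult[OF DERIV_diff[OF d1 d2]])
qed

lemma gg_deriv: "(gg N has_real_derivative (3/2) * (\<Sum>k<N. t^(3*k) - t^(3*k+2))) (at t)" for t :: real
proof -
  have "((\<lambda>t. \<Sum>k<N. (3/2) * (t^(3*k+1) / real (3*k+1) - t^(3*k+3) / real (3*k+3))) has_real_derivative
      (\<Sum>k<N. (3/2) * (t^(3*k) - t^(3*k+2)))) (at t)"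
    by (rule DERIV_sum) (rule gg_term_deriv[of _ t])
  then show ?thesis unfolding gg_def[abs_def] by (simp add: sum_distrib_left)
qed

lemma geo_id: "(\<Sum>k<N. t^(3*k) - t^(3*k+2)) * (1 + t + t^2) = (1 + t) * (1 - t^(3*N)) " for t :: real
proof (induction N)
  case 0
  then show ?case by simp
next
  case (Suc N)
  have "(\<Sum>k<Suc N. t^(3*k) - t^(3*k+2)) * (1 + t + t^2)
      = (\<Sum>k<N. t^(3*k) - t^(3*k+2)) * (1 + t + t^2) + (t^(3*N) - t^(3*N+2)) * (1 + t + t^2)"
    by (simp add: algebra_simps)
  also have "\<dots> = (1 + t) * (1 - t^(3*N)) + (t^(3*N) - t^(3*N+2)) * (1 + t + t^2)"
    using Suc by simp
  also have "\<dots> = (1 + t) * (1 - t^(3 * Suc N))"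
  proof -
    have e1: "t^(3 * Suc N) = t^(3*N) * t^3" by (simp add: power_add[symmetric] add.commute)
    have e2: "t^(3 * N + 2) = t^(3*N) * t^2" by (simp add: power_add[symmetric])
    show ?thesis unfolding e1 e2 by (simp add: algebra_simps power2_eq_square power3_eq_cube)
  qed
  finally show ?case .
qed

lemma gg_deriv':
  fixes t :: real
  shows "(gg N has_real_derivative (3/2) * ((1 + t) / (1 + t + t^2)) - (3/2) * ((1 + t) * t^(3*N) / (1 + t + t^2))) (at t)"
proof -
  define Q where "Q = 1 + t + t^2"
  define S where "S = (\<Sum>k<N. t^(3*k) - t^(3*k+2))"
  define P where "P = t^(3*N)"
  have q: "Q \<noteq> 0" using Qpos[of t] unfolding Q_def by simp
  have "S * Q = (1 + t) * (1 - P)"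
    using geo_id[where N=N and t=t] unfolding S_def Q_def P_def .
  then have S: "S = (1 + t) * (1 - P) / Q"
    using q by (simp add: eq_divide_eq)
  have e: "(3/2) * S = (3/2) * ((1 + t) / Q) - (3/2) * ((1 + t) * P / Q)"
    unfolding S using q by (simp add: field_simps)
  show ?thesis using DERIV_cong[OF gg_deriv[where N=N and t=t] e[unfolded S_def Q_def P_def]] .
qed

lemma partial_upper: "gg N 1 - (3/2) * hh 1 \<le> gg N 0 - (3/2) * hh 0"
proof (rule deriv_nonpos_imp_antimono[where g = "\<lambda>t. gg N t - (3/2) * hh t"
      and g' = "\<lambda>t. - (3/2) * ((1 + t) * t^(3*N) / (1 + t + t^2))"])
  fix t :: real assume t: "t \<in> {0..1}"
  show "((\<lambda>t. gg N t - (3/2) * hh t) has_real_derivative - (3/2) * ((1 + t) * t^(3*N) / (1 + t + t^2))) (at t)"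
    using DERIV_diff[OF gg_deriv'[of N t] DERIV_cmult[OF hh_deriv[of t], of "3/2"]] by simp
  have q: "0 < 1 + t + t^2" by (rule Qpos)
  show "- (3/2) * ((1 + t) * t^(3*N) / (1 + t + t^2)) \<le> 0"
    using t q by (simp add: divide_simps)
qed simp

lemma partial_lower: "gg N 0 - (3/2) * hh 0 \<le> gg N 1 - (3/2) * hh 1 + (3/2) / real (3*N+1)"
proof -
  define f where "f = (\<lambda>t. gg N t - (3/2) * hh t + (3/2) * t^(3*N+1) / real (3*N+1))"
  have "f 0 \<le> f 1"
  proof (rule DERIV_nonneg_imp_nondecreasing[where f = f])
    fix t :: real assume t: "0 \<le> t" "t \<le> 1"
    have q: "0 < 1 + t + t^2" by (rule Qpos)
    have dp: "((\<lambda>t. (3/2) * t^(3*N+1) / real (3*N+1)) has_real_derivative (3/2) * t^(3*N)) (at t)"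
    proof -
      have "((\<lambda>t. t^(3*N+1)) has_real_derivative real (3*N+1) * t^(3*N)) (at t)"
        using DERIV_pow[of "3*N+1" t] by simp
      then have "((\<lambda>t. (3/2) * t^(3*N+1) / real (3*N+1)) has_real_derivative (3/2) * (real (3*N+1) * t^(3*N)) / real (3*N+1)) (at t)"
        by (intro DERIV_cdivide DERIV_cmult)
      moreover have "(3/2) * (real (3*N+1) * t^(3*N)) / real (3*N+1) = (3/2) * t^(3*N)"
        by (simp add: field_simps del: of_nat_Suc of_nat_add)
      ultimately show ?thesis by (rule DERIV_cong)
    qed
    have d: "(f has_real_derivative
        - (3/2) * ((1 + t) * t^(3*N) / (1 + t + t^2)) + (3/2) * t^(3*N)) (at t)"
      unfolding f_def
      using DERIV_add[OF DERIV_diff[OF gg_deriv'[of N t] DERIV_cmult[OF hh_deriv[of t], of "3/2"]] dp] by simp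
    have "(1 + t) * t^(3*N) / (1 + t + t^2) \<le> t^(3*N)"
    proof -
      define Q where "Q = 1 + t + t^2"
      define P where "P = t^(3*N)"
      have "0 \<le> P" unfolding P_def using t by simp
      moreover have "1 + t \<le> Q" "0 < Q" unfolding Q_def using q by auto
      ultimately have "P * (1 + t) \<le> P * Q" by (intro mult_left_mono)
      with \<open>0 < Q\<close> have "(1 + t) * P / Q \<le> P"
        by (simp add: divide_le_eq mult.commute)
      then show ?thesis unfolding P_def Q_def .
    qed
    then have "0 \<le> - (3/2) * ((1 + t) * t^(3*N) / (1 + t + t^2)) + (3/2) * t^(3*N)" by linarith
    with d show "\<exists>y. (f has_real_derivative y) (at t) \<and> 0 \<le> y"
      by blast
  qed simp
  then show ?thesis unfolding f_def by simp
qed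

lemma gg_zero: "gg N 0 = 0" by (simp add: gg_def power_0_left)

lemma gg_one_term0: "0 \<le> x \<Longrightarrow> (3/2) * (1 / (3 * x + 1) - 1 / (3 * (x + 1))) = 1 / ((3 * x + 1) * (x + 1))"
  for x :: real
proof -
  assume x: "0 \<le> x"
  have gen: "(3/2) * (1/a - 1/(3*b)) = (3*b - a) / (2*(a*b))" if "a \<noteq> 0" "b \<noteq> 0" for a b :: real
    using that by (simp add: field_simps)
  have p1: "3 * x + 1 \<noteq> 0" "x + 1 \<noteq> 0" using x by linarith+
  have "(3/2) * (1 / (3 * x + 1) - 1 / (3 * (x + 1))) = (3*(x+1) - (3*x+1)) / (2*((3*x+1)*(x+1)))"
    by (rule gen[OF p1])
  also have "3*(x+1) - (3*x+1) = (2::real)" by simp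
  also have "2 / (2*((3*x+1)*(x+1))) = 1 / ((3*x+1)*(x+1))"
  proof -
    have "2 / (2 * c) = 1 / c" for c :: real by simp
    then show ?thesis .
  qed
  finally show ?thesis .
qed

lemma gg_one_term: "(3/2) * (1 / real (3*k+1) - 1 / real (3*k+3)) = 1 / ((3 * real k + 1) * (real k + 1))"
proof -
  have a: "real (3*k+1) = 3 * real k + 1" by simp
  have b: "real (3*k+3) = 3 * (real k + 1)" by simp
  show ?thesis unfolding a b by (rule gg_one_term0) simp
qed

lemma gg_one: "gg N 1 = (\<Sum>k<N. 1 / ((3 * real k + 1) * (real k + 1)))"
  unfolding gg_def by (rule sum.cong) (simp_all add: gg_one_term[symmetric])

lemma hh_diff: "(3/2) * (hh 1 - hh 0) = pi * sqrt 3 / 12 + 3 / 4 * ln 3"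
proof -
  have s3: "sqrt 3 * sqrt 3 = (3::real)" by simp
  have a1: "arctan (sqrt 3) = pi / 3"
    using arctan_tan[of "pi/3"] tan_60 by simp
  have a2: "arctan (1 / sqrt 3) = pi / 6"
    using arctan_tan[of "pi/6"] tan_30 by simp
  have e3: "3 / sqrt 3 = sqrt (3::real)"
    using s3 by (simp add: field_simps)
  have h1: "hh 1 = ln 3 / 2 + arctan (sqrt 3) / sqrt 3"
  proof -
    have "hh 1 = ln (1 + 1 + 1^2) / 2 + arctan ((2*1+1) / sqrt 3) / sqrt 3" by (simp only: hh_def)
    also have "(1 + 1 + 1^2 :: real) = 3" by simp
    also have "((2*1+1) / sqrt 3 :: real) = 3 / sqrt 3" by simp
    also have "(3 / sqrt 3 :: real) = sqrt 3" by (rule e3)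
    finally show ?thesis .
  qed
  have h0: "hh 0 = arctan (1 / sqrt 3) / sqrt 3"
    by (simp add: hh_def)
  have "hh 1 - hh 0 = ln 3 / 2 + (pi/3 - pi/6) / sqrt 3"
    unfolding h1 h0 a1 a2 by (simp add: diff_divide_distrib)
  then have "(3/2) * (hh 1 - hh 0) = 3/4 * ln 3 + pi / 4 / sqrt 3" by (simp add: field_simps)
  also have "pi / 4 / sqrt 3 = pi * sqrt 3 / 12"
    using s3 by (simp add: field_simps)
  finally show ?thesis by simp
qed

lemma S0_sums: "(\<lambda>k::nat. 1 / ((3 * real k + 1) * (real k + 1))) sums (pi * sqrt 3 / 12 + 3 / 4 * ln 3)"
proof -
  define L where "L = pi * sqrt 3 / 12 + 3 / 4 * ln (3::real)"
  have up: "(\<Sum>k<N. 1 / ((3 * real k + 1) * (real k + 1))) \<le> L" for N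
    using partial_upper[of N] hh_diff unfolding gg_zero gg_one L_def by simp
  have lo: "L - (3/2) / (3 * real N + 1) \<le> (\<Sum>k<N. 1 / ((3 * real k + 1) * (real k + 1)))" for N
    using partial_lower[of N] hh_diff unfolding gg_zero gg_one L_def by (simp add: field_simps)
  have lim: "(\<lambda>N. L - (3/2) / (3 * real N + 1)) \<longlonglongrightarrow> L"
  proof -
    have z: "(\<lambda>N. (3/2) * inverse (real (Suc N))) \<longlonglongrightarrow> 0"
      using tendsto_mult_right_zero[OF LIMSEQ_inverse_real_of_nat, of "3/2"] by simp
    have "(\<lambda>N. (3/2) / (3 * real N + 1)) \<longlonglongrightarrow> 0"
    proof (rule real_tendsto_sandwich[OF _ _ tendsto_const z])
      show "\<forall>\<^sub>F N in sequentially. 0 \<le> (3/2) / (3 * real N + 1)" by simp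
      show "\<forall>\<^sub>F N in sequentially. (3/2) / (3 * real N + 1) \<le> (3/2) * inverse (real (Suc N))"
        by (auto simp: field_simps)
    qed
    from tendsto_diff[OF tendsto_const this, of L] show ?thesis by simp
  qed
  have "(\<lambda>N. \<Sum>k<N. 1 / ((3 * real k + 1) * (real k + 1))) \<longlonglongrightarrow> L"
    by (rule real_tendsto_sandwich[OF _ _ lim tendsto_const]) (use up lo in auto)
  then show ?thesis unfolding sums_def L_def .
qed



definition Fz :: "real \<Rightarrow> (real \<Rightarrow> real \<Rightarrow> real) \<Rightarrow> nat \<Rightarrow> nat \<Rightarrow> real" where
  "Fz c ra n k = c / ((3 * real k + 1) * (real k + 1)) * (\<Prod>i<n. ra (real i) (real k))"

lemma Fz_Suc_n: "Fz c ra (Suc n) k = Fz c ra n k * ra (real n) (real k)"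
  by (simp add: Fz_def)

lemma null_cmp:
  fixes f :: "nat \<Rightarrow> real"
  assumes "\<And>n. norm (f n) \<le> g n" "g \<longlonglongrightarrow> 0"
  shows "f \<longlonglongrightarrow> 0"
proof (rule tendsto_norm_zero_cancel)
  show "(\<lambda>n. norm (f n)) \<longlonglongrightarrow> 0"
    by (rule real_tendsto_sandwich[OF _ _ tendsto_const assms(2)]) (use assms(1) in auto)
qed

lemma const_div_lim: "(\<lambda>k. C / (3 * real k + 1)) \<longlonglongrightarrow> 0" if "0 \<le> C" for C :: real
proof -
  have z: "(\<lambda>N. C * inverse (real (Suc N))) \<longlonglongrightarrow> 0"
    using tendsto_mult_right_zero[OF LIMSEQ_inverse_real_of_nat, of C] by simp
  show ?thesis
  proof (rule real_tendsto_sandwich[OF _ _ tendsto_const z])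
    show "\<forall>\<^sub>F N in sequentially. 0 \<le> C / (3 * real N + 1)" using that by simp
    show "\<forall>\<^sub>F N in sequentially. C / (3 * real N + 1) \<le> C * inverse (real (Suc N))"
      using that by (auto simp: field_simps intro!: mult_left_mono)
  qed
qed

lemma base_step: "0 \<le> y \<Longrightarrow> c / ((3 * (y + 1) + 1) * (y + 1 + 1)) =
    c / ((3 * y + 1) * (y + 1)) * ((3*y+1)*(y+1)/((3*y+4)*(y+2)))" for y c :: real
proof -
  assume y: "0 \<le> y"
  have a: "3 * (y + 1) + 1 = 3 * y + 4" "y + 1 + 1 = y + 2" by simp_all
  have p: "3*y+1 \<noteq> 0" "y+1 \<noteq> 0" "3*y+4 \<noteq> 0" "y+2 \<noteq> 0" using y by linarith+
  have m: "(3*y+1)*(y+1) \<noteq> 0" using p by simp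
  have gen: "c / b = c / a * (a / b)" if "a \<noteq> 0" for a b :: real using that by simp
  show ?thesis unfolding a by (rule gen[OF m])
qed

lemma wz_main:
  fixes ra rb R :: "real \<Rightarrow> real \<Rightarrow> real" and c q :: real and K :: "real \<Rightarrow> real"
  assumes wz: "\<And>x y. 0 \<le> x \<Longrightarrow> 0 \<le> y \<Longrightarrow> 1 - ra x y = R x y - rb x y * R x (y+1)"
    and compat: "\<And>x y. 0 \<le> x \<Longrightarrow> 0 \<le> y \<Longrightarrow> rb x y * ra x (y+1) = ra x y * rb (x+1) y"
    and base: "\<And>y. 0 \<le> y \<Longrightarrow> rb 0 y = (3*y+1)*(y+1)/((3*y+4)*(y+2))"
    and qb: "\<And>x y. 0 \<le> x \<Longrightarrow> 0 \<le> y \<Longrightarrow> \<bar>ra x y\<bar> \<le> q"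
    and q0: "0 \<le> q" and q1: "q < 1"
    and Rb: "\<And>x y. 0 \<le> x \<Longrightarrow> 0 \<le> y \<Longrightarrow> \<bar>R x y\<bar> \<le> K x * (y+1)"
  shows "(\<lambda>n. Fz c ra n 0 * R (real n) 0) sums (c * (pi * sqrt 3 / 12 + 3 / 4 * ln 3))"
proof -
  define F where "F = Fz c ra"
  define G where "G = (\<lambda>n k. F n k * R (real n) (real k))"
  define S where "S = pi * sqrt 3 / 12 + 3 / 4 * ln (3::real)"
  have FSn: "F (Suc n) k = F n k * ra (real n) (real k)" for n k
    unfolding F_def by (rule Fz_Suc_n)
  have FSk: "F n (Suc k) = F n k * rb (real n) (real k)" for n k
  proof (induction n)
    case 0
    have "F 0 (Suc k) = c / ((3 * (real k + 1) + 1) * (real k + 1 + 1))"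
      unfolding F_def Fz_def by simp
    also have "\<dots> = c / ((3 * real k + 1) * (real k + 1)) * ((3*real k+1)*(real k+1)/((3*real k+4)*(real k+2)))"
      by (rule base_step) simp
    also have "\<dots> = F 0 k * rb (real 0) (real k)"
      unfolding F_def Fz_def using base[of "real k"] by simp
    finally show ?case .
  next
    case (Suc n)
    have "F (Suc n) (Suc k) = F n (Suc k) * ra (real n) (real k + 1)"
      using FSn[of n "Suc k"] by (simp add: add.commute)
    also have "\<dots> = F n k * (rb (real n) (real k) * ra (real n) (real k + 1))"
      using Suc.IH by simp
    also have "rb (real n) (real k) * ra (real n) (real k + 1) = ra (real n) (real k) * rb (real n + 1) (real k)"
      by (rule compat) simp_all
    also have "F n k * (ra (real n) (real k) * rb (real n + 1) (real k)) = F (Suc n) k * rb (real (Suc n)) (real k)"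
      using FSn[of n k] by (simp add: add.commute)
    finally show ?case .
  qed
  have WZ: "F n k - F (Suc n) k = G n k - G n (Suc k)" for n k
  proof -
    have "F n k - F (Suc n) k = F n k * (1 - ra (real n) (real k))"
      using FSn[of n k] by (simp add: algebra_simps)
    also have "\<dots> = F n k * (R (real n) (real k) - rb (real n) (real k) * R (real n) (real k + 1))"
      using wz[of "real n" "real k"] by simp
    also have "\<dots> = G n k - G n (Suc k)"
      unfolding G_def using FSk[of n k] by (simp add: algebra_simps)
    finally show ?thesis .
  qed
  have Fb: "\<bar>F n k\<bar> \<le> q^n * \<bar>F 0 k\<bar>" for n k
  proof (induction n)
    case 0 then show ?case by simp
  next
    case (Suc n)
    have "\<bar>F (Suc n) k\<bar> = \<bar>F n k\<bar> * \<bar>ra (real n) (real k)\<bar>"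
      using FSn[of n k] by (simp add: abs_mult)
    also have "\<dots> \<le> (q^n * \<bar>F 0 k\<bar>) * q"
      by (rule mult_mono[OF Suc.IH qb]) (use q0 in simp_all)
    finally show ?case by (simp add: algebra_simps)
  qed
  have F0: "F 0 k = c * (1 / ((3 * real k + 1) * (real k + 1)))" for k
    unfolding F_def Fz_def by simp
  have F0sums: "F 0 sums (c * S)"
    unfolding F0[abs_def] S_def by (rule sums_mult[OF S0_sums])
  have absF0: "summable (\<lambda>k. \<bar>F 0 k\<bar>)"
  proof -
    have "summable (\<lambda>k. \<bar>c\<bar> * (1 / ((3 * real k + 1) * (real k + 1))))"
      by (rule summable_mult[OF sums_summable[OF S0_sums]])
    moreover have "\<bar>F 0 k\<bar> = \<bar>c\<bar> * (1 / ((3 * real k + 1) * (real k + 1)))" for k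
      unfolding F0 by (simp add: abs_mult)
    ultimately show ?thesis by simp
  qed
  have sumF: "summable (F n)" and sumabsF: "summable (\<lambda>k. \<bar>F n k\<bar>)" for n
  proof -
    have s: "summable (\<lambda>k. q^n * \<bar>F 0 k\<bar>)" by (rule summable_mult[OF absF0])
    show "summable (F n)"
      by (rule summable_comparison_test[OF _ s]) (use Fb in auto)
    show "summable (\<lambda>k. \<bar>F n k\<bar>)"
      by (rule summable_comparison_test[OF _ s]) (use Fb in auto)
  qed
  define T where "T n = suminf (F n)" for n
  have Tb: "\<bar>T n\<bar> \<le> q^n * suminf (\<lambda>k. \<bar>F 0 k\<bar>)" for n
  proof -
    have "\<bar>T n\<bar> \<le> suminf (\<lambda>k. \<bar>F n k\<bar>)"
      unfolding T_def using summable_norm[OF sumabsF[of n, unfolded real_norm_def[symmetric]]]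
      by simp
    also have "\<dots> \<le> suminf (\<lambda>k. q^n * \<bar>F 0 k\<bar>)"
      by (rule suminf_le) (use Fb sumabsF summable_mult[OF absF0] in auto)
    also have "\<dots> = q^n * suminf (\<lambda>k. \<bar>F 0 k\<bar>)"
      by (rule suminf_mult[OF absF0])
    finally show ?thesis .
  qed
  have Tlim: "T \<longlonglongrightarrow> 0"
  proof (rule null_cmp)
    show "norm (T n) \<le> q^n * suminf (\<lambda>k. \<bar>F 0 k\<bar>)" for n
      using Tb by simp
    show "(\<lambda>n. q^n * suminf (\<lambda>k. \<bar>F 0 k\<bar>)) \<longlonglongrightarrow> 0"
      by (rule tendsto_mult_left_zero[OF LIMSEQ_power_zero]) (use q0 q1 in simp)
  qed
  have Glim: "(\<lambda>k. G n k) \<longlonglongrightarrow> 0" for n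
  proof (rule null_cmp)
    define C where "C = \<bar>c\<bar> * K (real n)"
    have K0: "0 \<le> K (real n)"
    proof -
      have "0 \<le> \<bar>R (real n) 0\<bar>" by simp
      also have "\<dots> \<le> K (real n) * (0 + 1)" by (rule Rb) simp_all
      finally show ?thesis by simp
    qed
    show "norm (G n k) \<le> C / (3 * real k + 1)" for k
    proof -
      have qn: "q^n \<le> 1" using q0 q1 by (simp add: power_le_one)
      have "norm (G n k) = \<bar>F n k\<bar> * \<bar>R (real n) (real k)\<bar>"
        unfolding G_def by (simp add: abs_mult)
      also have "\<dots> \<le> \<bar>F 0 k\<bar> * (K (real n) * (real k + 1))"
      proof (rule mult_mono)
        show "\<bar>F n k\<bar> \<le> \<bar>F 0 k\<bar>"
          using Fb[of n k] mult_right_mono[OF qn, of "\<bar>F 0 k\<bar>"] by simp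
        show "\<bar>R (real n) (real k)\<bar> \<le> K (real n) * (real k + 1)" by (rule Rb) simp_all
      qed simp_all
      also have "\<dots> = C / (3 * real k + 1)"
      proof -
        have gen: "\<bar>c * (1 / (a * b))\<bar> * (Kn * b) = (\<bar>c\<bar> * Kn) / a" if "0 < a" "0 < b" for a b Kn :: real
          using that by (simp add: abs_mult field_simps)
        show ?thesis unfolding F0 C_def by (rule gen) simp_all
      qed
      finally show ?thesis .
    qed
    show "(\<lambda>k. C / (3 * real k + 1)) \<longlonglongrightarrow> 0"
      by (rule const_div_lim) (use K0 in \<open>simp add: C_def\<close>)
  qed
  have step: "T n - T (Suc n) = G n 0" for n
  proof -
    have "(\<lambda>k. F n k - F (Suc n) k) sums (T n - T (Suc n))"
      unfolding T_def by (rule sums_diff[OF summable_sums[OF sumF] summable_sums[OF sumF]])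
    moreover have "(\<lambda>k. F n k - F (Suc n) k) sums (G n 0 - 0)"
      unfolding WZ by (rule telescope_sums'[OF Glim])
    ultimately show ?thesis using sums_unique2 by fastforce
  qed
  have "(\<lambda>n. T n - T (Suc n)) sums (T 0 - 0)"
    by (rule telescope_sums'[OF Tlim])
  moreover have "T 0 = c * S" unfolding T_def using F0sums sums_unique by metis
  ultimately have "(\<lambda>n. G n 0) sums (c * S)" unfolding step by simp
  then show ?thesis unfolding G_def F_def S_def by simp
qed

lemma Fz_closed:
  fixes ph sg :: "real \<Rightarrow> real" and P :: "nat \<Rightarrow> real" and ra :: "real \<Rightarrow> real \<Rightarrow> real"
  assumes phi: "\<And>x. 0 \<le> x \<Longrightarrow> ph x * ra x 0 = ph (x+1) * sg x" and c: "ph 0 = c"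
    and PS: "\<And>n. P (Suc n) = P n * sg (real n)" and P0: "P 0 = 1"
  shows "Fz c ra n 0 = ph (real n) * P n"
proof (induction n)
  case 0
  then show ?case using c P0 by (simp add: Fz_def)
next
  case (Suc n)
  have "Fz c ra (Suc n) 0 = Fz c ra n 0 * ra (real n) 0"
    using Fz_Suc_n[of c ra n 0] by simp
  also have "\<dots> = P n * (ph (real n) * ra (real n) 0)" using Suc.IH by simp
  also have "ph (real n) * ra (real n) 0 = ph (real n + 1) * sg (real n)" by (rule phi) simp
  also have "P n * (ph (real n + 1) * sg (real n)) = ph (real (Suc n)) * P (Suc n)"
    using PS[of n] by (simp add: add.commute)
  finally show ?case .
qed



lemma eqfrac: "B \<noteq> 0 \<Longrightarrow> D \<noteq> 0 \<Longrightarrow> A * D = C * B \<Longrightarrow> A / B = C / (D::real)"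
  by (simp add: frac_eq_eq)

lemma wz_frac:
  fixes N1 D1 NR DR N2 D2 NR' DR' :: real
  assumes "D1 \<noteq> 0" "DR \<noteq> 0" "D2 \<noteq> 0" "DR' \<noteq> 0"
    and "(D1 - N1) * (DR * (D2 * DR')) = (NR * (D2 * DR') - N2 * NR' * DR) * D1"
  shows "1 - N1 / D1 = NR / DR - N2 / D2 * (NR' / DR')"
proof -
  have "1 - N1 / D1 = (D1 - N1) / D1" using assms(1) by (simp add: diff_divide_distrib)
  moreover have "NR / DR - N2 / D2 * (NR' / DR') = (NR * (D2 * DR') - N2 * NR' * DR) / (DR * (D2 * DR'))"
    using assms(2-4) by (simp add: field_simps)
  moreover have "(D1 - N1) / D1 = (NR * (D2 * DR') - N2 * NR' * DR) / (DR * (D2 * DR'))"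
    by (rule eqfrac) (use assms in simp_all)
  ultimately show ?thesis by simp
qed

lemma compat_frac:
  fixes N2 D2 N1' D1' N1 D1 N2' D2' :: real
  assumes "D2 \<noteq> 0" "D1' \<noteq> 0" "D1 \<noteq> 0" "D2' \<noteq> 0"
    and "N2 * N1' * (D1 * D2') = N1 * N2' * (D2 * D1')"
  shows "N2 / D2 * (N1' / D1') = N1 / D1 * (N2' / D2')"
proof -
  have "N2 / D2 * (N1' / D1') = (N2 * N1') / (D2 * D1')" by simp
  also have "\<dots> = (N1 * N2') / (D1 * D2')"
    by (rule eqfrac) (use assms in simp_all)
  also have "\<dots> = N1 / D1 * (N2' / D2')" by simp
  finally show ?thesis .
qed

lemma q3_bound:
  fixes a1 a2 a3 d1 d2 d3 A :: real
  assumes "0 \<le> a1" "a1 \<le> A * d1" "0 < d1" "0 \<le> a2" "a2 \<le> d2" "0 < d2" "0 \<le> a3" "a3 \<le> d3" "0 < d3"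
  shows "\<bar>a1 * a2 * a3 / (d1 * d2 * d3)\<bar> \<le> A" "\<bar>- (a1 * a2 * a3) / (d1 * d2 * d3)\<bar> \<le> A"
proof -
  have A0: "0 \<le> A" using assms(1-3) by (metis le_less_trans not_le zero_le_mult_iff less_le_not_le)
  have "a1 * a2 * a3 \<le> (A * d1) * d2 * d3"
    using assms by (intro mult_mono) (auto intro: mult_nonneg_nonneg)
  moreover have "0 < d1 * d2 * d3" using assms by simp
  moreover have "0 \<le> a1 * a2 * a3" using assms by simp
  ultimately have "a1 * a2 * a3 / (d1 * d2 * d3) \<le> A"
    by (simp add: divide_le_eq mult.assoc)
  moreover have "0 \<le> a1 * a2 * a3 / (d1 * d2 * d3)" using assms by simp
  ultimately show "\<bar>a1 * a2 * a3 / (d1 * d2 * d3)\<bar> \<le> A" "\<bar>- (a1 * a2 * a3) / (d1 * d2 * d3)\<bar> \<le> A"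
    by simp_all
qed

lemma q5_bound:
  fixes a1 a2 a3 a4 a5 d1 d2 d3 d4 d5 A :: real
  assumes "0 \<le> a1" "a1 \<le> A * d1" "0 < d1" "0 \<le> a2" "a2 \<le> d2" "0 < d2" "0 \<le> a3" "a3 \<le> d3" "0 < d3"
     "0 \<le> a4" "a4 \<le> d4" "0 < d4" "0 \<le> a5" "a5 \<le> d5" "0 < d5"
  shows "\<bar>a1 * a2 * a3 * a4 * a5 / (d1 * d2 * d3 * d4 * d5)\<bar> \<le> A"
proof -
  have "a1 * a2 * a3 * a4 * a5 \<le> (A * d1) * d2 * d3 * d4 * d5"
    using assms by (intro mult_mono) (auto intro: mult_nonneg_nonneg)
  moreover have "0 < d1 * d2 * d3 * d4 * d5" using assms by simp
  moreover have "0 \<le> a1 * a2 * a3 * a4 * a5" using assms by simp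
  ultimately have "a1 * a2 * a3 * a4 * a5 / (d1 * d2 * d3 * d4 * d5) \<le> A"
    by (simp add: divide_le_eq mult.assoc)
  moreover have "0 \<le> a1 * a2 * a3 * a4 * a5 / (d1 * d2 * d3 * d4 * d5)" using assms by simp
  ultimately show ?thesis by simp
qed

lemma quad_R_bound:
  fixes b c y d1 d2 :: real
  assumes "0 \<le> b" "0 \<le> c" "0 \<le> y" "1 \<le> d1" "y + 1 \<le> d2"
  shows "\<bar>(y^2 + b*y + c) / (d1 * d2)\<bar> \<le> (1 + b + c) * (y + 1)"
proof -
  define N where "N = y^2 + b*y + c"
  have N0: "0 \<le> N" unfolding N_def using assms by simp
  have "(1 + b + c) * (y + 1)^2 - N = (2*y+1) + b*(y*y+y+1) + c*(y*y+2*y)"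
    unfolding N_def by (simp add: power2_eq_square algebra_simps)
  also have "0 \<le> \<dots>" using assms by (intro add_nonneg_nonneg mult_nonneg_nonneg) auto
  finally have N1: "N \<le> (1 + b + c) * (y + 1)^2" by simp
  have y1: "0 < y + 1" using assms by simp
  have den: "y + 1 \<le> d1 * d2"
  proof -
    have "1 * (y + 1) \<le> d1 * d2" using assms y1 by (intro mult_mono) auto
    then show ?thesis by simp
  qed
  have "N / (d1 * d2) \<le> N / (y + 1)"
    by (rule divide_left_mono[OF den N0]) (use y1 den in auto)
  also have "\<dots> \<le> (1 + b + c) * (y + 1)^2 / (y + 1)"
    by (rule divide_right_mono[OF N1]) (use y1 in simp)
  also have "\<dots> = (1 + b + c) * (y + 1)" using y1 by (simp add: power2_eq_square)
  finally have "N / (d1 * d2) \<le> (1 + b + c) * (y + 1)" .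
  moreover have "0 \<le> N / (d1 * d2)" using N0 den y1 by simp
  ultimately show ?thesis unfolding N_def by simp
qed

lemma cubic_R_bound:
  fixes b c d y d1 d2 d3 :: real
  assumes "0 \<le> b" "0 \<le> c" "0 \<le> d" "0 \<le> y" "1 \<le> d1" "y + 1 \<le> d2" "y + 1 \<le> d3"
  shows "\<bar>(y^3 + b*y^2 + c*y + d) / (d1 * d2 * d3)\<bar> \<le> (1 + b + c + d) * (y + 1)"
proof -
  define N where "N = y^3 + b*y^2 + c*y + d"
  have N0: "0 \<le> N" unfolding N_def using assms by simp
  have "(1 + b + c + d) * (y + 1)^3 - N = (3*y*y+3*y+1) + b*(y*y*y+2*y*y+3*y+1) + c*(y*y*y+3*y*y+2*y+1) + d*(y*y*y+3*y*y+3*y)"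
    unfolding N_def by (simp add: power3_eq_cube power2_eq_square algebra_simps)
  also have "0 \<le> \<dots>" using assms by (intro add_nonneg_nonneg mult_nonneg_nonneg) auto
  finally have N1: "N \<le> (1 + b + c + d) * (y + 1)^3" by simp
  have y1: "0 < y + 1" using assms by simp
  have den: "(y + 1)^2 \<le> d1 * d2 * d3"
  proof -
    have "1 * (y + 1) * (y + 1) \<le> d1 * d2 * d3" using assms y1 by (intro mult_mono) auto
    then show ?thesis by (simp add: power2_eq_square)
  qed
  have y2: "0 < (y + 1)^2" using y1 by simp
  have dpos: "0 < d1 * d2 * d3" using y2 den by linarith
  have "N / (d1 * d2 * d3) \<le> N / (y + 1)^2"
    by (rule divide_left_mono[OF den N0]) (use y2 dpos in simp)
  also have "\<dots> \<le> (1 + b + c + d) * (y + 1)^3 / (y + 1)^2"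
    by (rule divide_right_mono[OF N1]) (use y2 in simp)
  also have "\<dots> = (1 + b + c + d) * (y + 1)" using y1 by (simp add: power2_eq_square power3_eq_cube)
  finally have "N / (d1 * d2 * d3) \<le> (1 + b + c + d) * (y + 1)" .
  moreover have "0 \<le> N / (d1 * d2 * d3)" using N0 dpos by simp
  ultimately show ?thesis unfolding N_def by simp
qed


definition N1b :: "real \<Rightarrow> real \<Rightarrow> real" where "N1b x y = (x+5/3)*(y+x+1/3)*(y+x+1)"
definition D1b :: "real \<Rightarrow> real \<Rightarrow> real" where "D1b x y = (y+2*x+3)*(y+x+4/3)*(y+2*x+2)"
definition N2b :: "real \<Rightarrow> real \<Rightarrow> real" where "N2b x y = (y+x+1/3)*(y+x+1)"
definition D2b :: "real \<Rightarrow> real \<Rightarrow> real" where "D2b x y = (y+x+4/3)*(y+2*x+2)"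
definition NRb :: "real \<Rightarrow> real \<Rightarrow> real" where "NRb x y = y^2 + (3*x+7/3)*y + (3*x^2+16/3*x+7/3)"
definition DRb :: "real \<Rightarrow> real \<Rightarrow> real" where "DRb x y = (x+1)*(y+2*x+2)"
definition Kb :: "real \<Rightarrow> real" where "Kb x = 1 + (3*x+7/3) + (3*x^2+16/3*x+7/3)"
definition Npb :: "real \<Rightarrow> real" where "Npb x = 6"
definition Dpb :: "real \<Rightarrow> real" where "Dpb x = 3*x+1"
definition Nsb :: "real \<Rightarrow> real" where "Nsb x = x+5/3"
definition Dsb :: "real \<Rightarrow> real" where "Dsb x = (x+3/2)*4"
definition Nrb :: "real \<Rightarrow> real" where "Nrb x = 9*x+7"
definition Drb :: "real \<Rightarrow> real" where "Drb x = (x+1)*(3*x+1)"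
definition Pb :: "nat \<Rightarrow> real" where "Pb n = pochhammer (5/3) n / pochhammer (3/2) n / 4 ^ n"

lemma b_Dpos:
  assumes "0 \<le> x" "0 \<le> y"
  shows "0 < D1b x y" "0 < D2b x y" "0 < DRb x y" "0 < Dpb x" "0 < Dsb x" "0 < Drb x"
  unfolding D1b_def D2b_def DRb_def Dpb_def Dsb_def Drb_def
  by ((intro mult_pos_pos zero_less_power)?; use assms in \<open>(simp only: ring_distribs)?; linarith\<close>)+

lemma b_Dnz:
  assumes "0 \<le> x" "0 \<le> y"
  shows "D1b x y \<noteq> 0" "D2b x y \<noteq> 0" "DRb x y \<noteq> 0" "Dpb x \<noteq> 0" "Dsb x \<noteq> 0" "Drb x \<noteq> 0"
  using b_Dpos[OF assms] by simp_all

lemma b_wz: "0 \<le> x \<Longrightarrow> 0 \<le> y \<Longrightarrow>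
    1 - N1b x y / D1b x y = NRb x y / DRb x y - N2b x y / D2b x y * (NRb x (y+1) / DRb x (y+1))"
proof -
  assume a: "0 \<le> x" "0 \<le> y"
  have p: "(D1b x y - N1b x y) * (DRb x y * (D2b x y * DRb x (y+1))) = (NRb x y * (D2b x y * DRb x (y+1)) - N2b x y * NRb x (y+1) * DRb x y) * D1b x y"
    unfolding N1b_def D1b_def N2b_def D2b_def NRb_def DRb_def by algebra
  have a1: "0 \<le> y + 1" using a by simp
  show ?thesis by (rule wz_frac[OF b_Dnz(1)[OF a] b_Dnz(3)[OF a] b_Dnz(2)[OF a] b_Dnz(3)[OF a(1) a1] p])
qed

lemma b_compat: "0 \<le> x \<Longrightarrow> 0 \<le> y \<Longrightarrow>
    N2b x y / D2b x y * (N1b x (y+1) / D1b x (y+1)) = N1b x y / D1b x y * (N2b (x+1) y / D2b (x+1) y)"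
proof -
  assume a: "0 \<le> x" "0 \<le> y"
  have p: "N2b x y * N1b x (y+1) * (D1b x y * D2b (x+1) y) = N1b x y * N2b (x+1) y * (D2b x y * D1b x (y+1))"
    unfolding N1b_def D1b_def N2b_def D2b_def by algebra
  have a1: "0 \<le> y + 1" "0 \<le> x + 1" using a by simp_all
  show ?thesis by (rule compat_frac[OF b_Dnz(2)[OF a] b_Dnz(1)[OF a(1) a1(1)] b_Dnz(1)[OF a] b_Dnz(2)[OF a1(2) a(2)] p])
qed

lemma b_base: "0 \<le> y \<Longrightarrow> N2b 0 y / D2b 0 y = (3*y+1)*(y+1)/((3*y+4)*(y+2))"
proof -
  assume a: "0 \<le> y"
  have p: "N2b 0 y * ((3*y+4)*(y+2)) = (3*y+1)*(y+1) * D2b 0 y"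
    unfolding N2b_def D2b_def by algebra
  have nz: "(3*y+4)*(y+2) \<noteq> 0" using a by simp
  show ?thesis by (rule eqfrac[OF b_Dnz(2)[of 0 y] nz p]) (use a in simp_all)
qed

lemma b_phi: "0 \<le> x \<Longrightarrow>
    Npb x / Dpb x * (N1b x 0 / D1b x 0) = Npb (x+1) / Dpb (x+1) * (Nsb x / Dsb x)"
proof -
  assume a: "0 \<le> x"
  have z: "0 \<le> (0::real)" "0 \<le> x + 1" using a by simp_all
  have p: "Npb x * N1b x 0 * (Dpb (x+1) * Dsb x) = Npb (x+1) * Nsb x * (Dpb x * D1b x 0)"
    unfolding N1b_def D1b_def Npb_def Dpb_def Nsb_def Dsb_def by algebra
  show ?thesis by (rule compat_frac[OF b_Dnz(4)[OF a z(1)] b_Dnz(1)[OF a z(1)] b_Dnz(4)[OF z(2) z(1)] b_Dnz(5)[OF a z(1)] p])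
qed

lemma b_rat: "0 \<le> x \<Longrightarrow> Npb x / Dpb x * (NRb x 0 / DRb x 0) = Nrb x / Drb x"
proof -
  assume a: "0 \<le> x"
  have z: "0 \<le> (0::real)" by simp
  have p: "(Npb x * NRb x 0) * Drb x = Nrb x * (Dpb x * DRb x 0)"
    unfolding NRb_def DRb_def Npb_def Dpb_def Nrb_def Drb_def by (simp add: power2_eq_square; algebra)
  have "Npb x / Dpb x * (NRb x 0 / DRb x 0) = (Npb x * NRb x 0) / (Dpb x * DRb x 0)" by simp
  also have "\<dots> = Nrb x / Drb x"
    by (rule eqfrac[OF _ b_Dnz(6)[OF a z] p]) (use b_Dnz[OF a z] in simp)
  finally show ?thesis .
qed

lemma b_q: "0 \<le> x \<Longrightarrow> 0 \<le> y \<Longrightarrow> \<bar>N1b x y / D1b x y\<bar> \<le> 5/9"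
  unfolding N1b_def D1b_def by (rule q3_bound(1); (simp only: ring_distribs)?; linarith)

lemma b_R: "0 \<le> x \<Longrightarrow> 0 \<le> y \<Longrightarrow> \<bar>NRb x y / DRb x y\<bar> \<le> Kb x * (y+1)"
  unfolding NRb_def DRb_def Kb_def
  by (rule quad_R_bound; ((intro add_nonneg_nonneg mult_nonneg_nonneg zero_le_power; simp)?; (simp only: ring_distribs)?; linarith))

lemma b_P: "Pb (Suc n) = Pb n * (Nsb (real n) / Dsb (real n))"
proof -
  have nz: "pochhammer (3/2::real) n \<noteq> 0" "pochhammer (5/3::real) n \<noteq> 0" "(4::real) ^ n \<noteq> 0" "real n + 3/2 \<noteq> (0::real)" "3/2 + real n \<noteq> (0::real)" "real n + 5/3 \<noteq> (0::real)" "5/3 + real n \<noteq> (0::real)"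
    by (simp_all add: pochhammer_eq_0_iff) (use pochhammer_pos in linarith)?
  show ?thesis unfolding Pb_def Nsb_def Dsb_def
    using nz by (simp add: pochhammer_rec' divide_simps algebra_simps power2_eq_square)
qed

lemma b_sums: "(\<lambda>n::nat. (9 * real n + 7) / ((real n + 1) * (3 * real n + 1)) * pochhammer (5/3) n / pochhammer (3/2) n / 4 ^ n) sums (6 * (pi * sqrt 3 / 12 + 3 / 4 * ln 3))"
proof -
  have main: "(\<lambda>n. Fz 6 (\<lambda>x y. N1b x y / D1b x y) n 0 * (NRb (real n) 0 / DRb (real n) 0)) sums (6 * (pi * sqrt 3 / 12 + 3 / 4 * ln 3))"
    by (rule wz_main[where ra = "\<lambda>x y. N1b x y / D1b x y" and rb = "\<lambda>x y. N2b x y / D2b x y"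
          and R = "\<lambda>x y. NRb x y / DRb x y" and q = "5/9" and K = Kb, OF b_wz b_compat b_base b_q _ _ b_R])
       simp_all
  have cl: "Fz 6 (\<lambda>x y. N1b x y / D1b x y) n 0 = Npb (real n) / Dpb (real n) * Pb n" for n
    by (rule Fz_closed[where ph = "\<lambda>x. Npb x / Dpb x" and sg = "\<lambda>x. Nsb x / Dsb x"
          and P = Pb and ra = "\<lambda>x y. N1b x y / D1b x y", OF b_phi _ b_P])
       (simp_all add: Npb_def Dpb_def Pb_def)
  have eq: "Fz 6 (\<lambda>x y. N1b x y / D1b x y) n 0 * (NRb (real n) 0 / DRb (real n) 0) = (9 * real n + 7) / ((real n + 1) * (3 * real n + 1)) * pochhammer (5/3) n / pochhammer (3/2) n / 4 ^ n" for n
  proof -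
    have "Fz 6 (\<lambda>x y. N1b x y / D1b x y) n 0 * (NRb (real n) 0 / DRb (real n) 0)
        = (Npb (real n) / Dpb (real n) * (NRb (real n) 0 / DRb (real n) 0)) * Pb n"
      unfolding cl by (simp only: ac_simps)
    also have "\<dots> = Nrb (real n) / Drb (real n) * Pb n"
      using b_rat[of "real n"] by simp
    also have "\<dots> = (9 * real n + 7) / ((real n + 1) * (3 * real n + 1)) * pochhammer (5/3) n / pochhammer (3/2) n / 4 ^ n"
      unfolding Nrb_def Drb_def Pb_def by simp
    finally show ?thesis .
  qed
  show ?thesis using main unfolding eq .
qed

definition N1c :: "real \<Rightarrow> real \<Rightarrow> real" where "N1c x y = (x+1/3)*(y+x+1/3)*(y+x+1)"
definition D1c :: "real \<Rightarrow> real \<Rightarrow> real" where "D1c x y = (y+2*x+7/3)*(y+2*x+4/3)*(y+x+2)"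
definition N2c :: "real \<Rightarrow> real \<Rightarrow> real" where "N2c x y = (y+x+1/3)*(y+x+1)"
definition D2c :: "real \<Rightarrow> real \<Rightarrow> real" where "D2c x y = (y+2*x+4/3)*(y+x+2)"
definition NRc :: "real \<Rightarrow> real \<Rightarrow> real" where "NRc x y = y^2 + (3*x+7/3)*y + (3*x^2+14/3*x+5/3)"
definition DRc :: "real \<Rightarrow> real \<Rightarrow> real" where "DRc x y = (x+1)*(y+2*x+4/3)"
definition Kc :: "real \<Rightarrow> real" where "Kc x = 1 + (3*x+7/3) + (3*x^2+14/3*x+5/3)"
definition Npc :: "real \<Rightarrow> real" where "Npc x = 6*x+4"
definition Dpc :: "real \<Rightarrow> real" where "Dpc x = x+1"
definition Nsc :: "real \<Rightarrow> real" where "Nsc x = (x+1/3)^2"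
definition Dsc :: "real \<Rightarrow> real" where "Dsc x = (x+5/3)*(x+7/6)*4"
definition Nrc :: "real \<Rightarrow> real" where "Nrc x = 9*x+5"
definition Drc :: "real \<Rightarrow> real" where "Drc x = x+1"
definition Pc :: "nat \<Rightarrow> real" where "Pc n = pochhammer (1/3) n ^ 2 / (pochhammer (5/3) n * pochhammer (7/6) n) / 4 ^ n"

lemma c_Dpos:
  assumes "0 \<le> x" "0 \<le> y"
  shows "0 < D1c x y" "0 < D2c x y" "0 < DRc x y" "0 < Dpc x" "0 < Dsc x" "0 < Drc x"
  unfolding D1c_def D2c_def DRc_def Dpc_def Dsc_def Drc_def
  by ((intro mult_pos_pos zero_less_power)?; use assms in \<open>(simp only: ring_distribs)?; linarith\<close>)+

lemma c_Dnz:
  assumes "0 \<le> x" "0 \<le> y"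
  shows "D1c x y \<noteq> 0" "D2c x y \<noteq> 0" "DRc x y \<noteq> 0" "Dpc x \<noteq> 0" "Dsc x \<noteq> 0" "Drc x \<noteq> 0"
  using c_Dpos[OF assms] by simp_all

lemma c_wz: "0 \<le> x \<Longrightarrow> 0 \<le> y \<Longrightarrow>
    1 - N1c x y / D1c x y = NRc x y / DRc x y - N2c x y / D2c x y * (NRc x (y+1) / DRc x (y+1))"
proof -
  assume a: "0 \<le> x" "0 \<le> y"
  have p: "(D1c x y - N1c x y) * (DRc x y * (D2c x y * DRc x (y+1))) = (NRc x y * (D2c x y * DRc x (y+1)) - N2c x y * NRc x (y+1) * DRc x y) * D1c x y"
    unfolding N1c_def D1c_def N2c_def D2c_def NRc_def DRc_def by algebra
  have a1: "0 \<le> y + 1" using a by simp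
  show ?thesis by (rule wz_frac[OF c_Dnz(1)[OF a] c_Dnz(3)[OF a] c_Dnz(2)[OF a] c_Dnz(3)[OF a(1) a1] p])
qed

lemma c_compat: "0 \<le> x \<Longrightarrow> 0 \<le> y \<Longrightarrow>
    N2c x y / D2c x y * (N1c x (y+1) / D1c x (y+1)) = N1c x y / D1c x y * (N2c (x+1) y / D2c (x+1) y)"
proof -
  assume a: "0 \<le> x" "0 \<le> y"
  have p: "N2c x y * N1c x (y+1) * (D1c x y * D2c (x+1) y) = N1c x y * N2c (x+1) y * (D2c x y * D1c x (y+1))"
    unfolding N1c_def D1c_def N2c_def D2c_def by algebra
  have a1: "0 \<le> y + 1" "0 \<le> x + 1" using a by simp_all
  show ?thesis by (rule compat_frac[OF c_Dnz(2)[OF a] c_Dnz(1)[OF a(1) a1(1)] c_Dnz(1)[OF a] c_Dnz(2)[OF a1(2) a(2)] p])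
qed

lemma c_base: "0 \<le> y \<Longrightarrow> N2c 0 y / D2c 0 y = (3*y+1)*(y+1)/((3*y+4)*(y+2))"
proof -
  assume a: "0 \<le> y"
  have p: "N2c 0 y * ((3*y+4)*(y+2)) = (3*y+1)*(y+1) * D2c 0 y"
    unfolding N2c_def D2c_def by algebra
  have nz: "(3*y+4)*(y+2) \<noteq> 0" using a by simp
  show ?thesis by (rule eqfrac[OF c_Dnz(2)[of 0 y] nz p]) (use a in simp_all)
qed

lemma c_phi: "0 \<le> x \<Longrightarrow>
    Npc x / Dpc x * (N1c x 0 / D1c x 0) = Npc (x+1) / Dpc (x+1) * (Nsc x / Dsc x)"
proof -
  assume a: "0 \<le> x"
  have z: "0 \<le> (0::real)" "0 \<le> x + 1" using a by simp_all
  have p: "Npc x * N1c x 0 * (Dpc (x+1) * Dsc x) = Npc (x+1) * Nsc x * (Dpc x * D1c x 0)"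
    unfolding N1c_def D1c_def Npc_def Dpc_def Nsc_def Dsc_def by algebra
  show ?thesis by (rule compat_frac[OF c_Dnz(4)[OF a z(1)] c_Dnz(1)[OF a z(1)] c_Dnz(4)[OF z(2) z(1)] c_Dnz(5)[OF a z(1)] p])
qed

lemma c_rat: "0 \<le> x \<Longrightarrow> Npc x / Dpc x * (NRc x 0 / DRc x 0) = Nrc x / Drc x"
proof -
  assume a: "0 \<le> x"
  have z: "0 \<le> (0::real)" by simp
  have p: "(Npc x * NRc x 0) * Drc x = Nrc x * (Dpc x * DRc x 0)"
    unfolding NRc_def DRc_def Npc_def Dpc_def Nrc_def Drc_def by (simp add: power2_eq_square; algebra)
  have "Npc x / Dpc x * (NRc x 0 / DRc x 0) = (Npc x * NRc x 0) / (Dpc x * DRc x 0)" by simp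
  also have "\<dots> = Nrc x / Drc x"
    by (rule eqfrac[OF _ c_Dnz(6)[OF a z] p]) (use c_Dnz[OF a z] in simp)
  finally show ?thesis .
qed

lemma c_q: "0 \<le> x \<Longrightarrow> 0 \<le> y \<Longrightarrow> \<bar>N1c x y / D1c x y\<bar> \<le> 1/2"
  unfolding N1c_def D1c_def by (rule q3_bound(1); (simp only: ring_distribs)?; linarith)

lemma c_R: "0 \<le> x \<Longrightarrow> 0 \<le> y \<Longrightarrow> \<bar>NRc x y / DRc x y\<bar> \<le> Kc x * (y+1)"
  unfolding NRc_def DRc_def Kc_def
  by (rule quad_R_bound; ((intro add_nonneg_nonneg mult_nonneg_nonneg zero_le_power; simp)?; (simp only: ring_distribs)?; linarith))

lemma c_P: "Pc (Suc n) = Pc n * (Nsc (real n) / Dsc (real n))"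
proof -
  have nz: "pochhammer (5/3::real) n \<noteq> 0" "pochhammer (7/6::real) n \<noteq> 0" "pochhammer (1/3::real) n \<noteq> 0" "(4::real) ^ n \<noteq> 0" "real n + 5/3 \<noteq> (0::real)" "5/3 + real n \<noteq> (0::real)" "real n + 7/6 \<noteq> (0::real)" "7/6 + real n \<noteq> (0::real)" "real n + 1/3 \<noteq> (0::real)" "1/3 + real n \<noteq> (0::real)"
    by (simp_all add: pochhammer_eq_0_iff) (use pochhammer_pos in linarith)?
  show ?thesis unfolding Pc_def Nsc_def Dsc_def
    using nz by (simp add: pochhammer_rec' divide_simps algebra_simps power2_eq_square)
qed

lemma c_sums: "(\<lambda>n::nat. (9 * real n + 5) / (real n + 1) * pochhammer (1/3) n ^ 2 / (pochhammer (5/3) n * pochhammer (7/6) n) / 4 ^ n) sums (4 * (pi * sqrt 3 / 12 + 3 / 4 * ln 3))"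
proof -
  have main: "(\<lambda>n. Fz 4 (\<lambda>x y. N1c x y / D1c x y) n 0 * (NRc (real n) 0 / DRc (real n) 0)) sums (4 * (pi * sqrt 3 / 12 + 3 / 4 * ln 3))"
    by (rule wz_main[where ra = "\<lambda>x y. N1c x y / D1c x y" and rb = "\<lambda>x y. N2c x y / D2c x y"
          and R = "\<lambda>x y. NRc x y / DRc x y" and q = "1/2" and K = Kc, OF c_wz c_compat c_base c_q _ _ c_R])
       simp_all
  have cl: "Fz 4 (\<lambda>x y. N1c x y / D1c x y) n 0 = Npc (real n) / Dpc (real n) * Pc n" for n
    by (rule Fz_closed[where ph = "\<lambda>x. Npc x / Dpc x" and sg = "\<lambda>x. Nsc x / Dsc x"
          and P = Pc and ra = "\<lambda>x y. N1c x y / D1c x y", OF c_phi _ c_P])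
       (simp_all add: Npc_def Dpc_def Pc_def)
  have eq: "Fz 4 (\<lambda>x y. N1c x y / D1c x y) n 0 * (NRc (real n) 0 / DRc (real n) 0) = (9 * real n + 5) / (real n + 1) * pochhammer (1/3) n ^ 2 / (pochhammer (5/3) n * pochhammer (7/6) n) / 4 ^ n" for n
  proof -
    have "Fz 4 (\<lambda>x y. N1c x y / D1c x y) n 0 * (NRc (real n) 0 / DRc (real n) 0)
        = (Npc (real n) / Dpc (real n) * (NRc (real n) 0 / DRc (real n) 0)) * Pc n"
      unfolding cl by (simp only: ac_simps)
    also have "\<dots> = Nrc (real n) / Drc (real n) * Pc n"
      using c_rat[of "real n"] by simp
    also have "\<dots> = (9 * real n + 5) / (real n + 1) * pochhammer (1/3) n ^ 2 / (pochhammer (5/3) n * pochhammer (7/6) n) / 4 ^ n"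
      unfolding Nrc_def Drc_def Pc_def by simp
    finally show ?thesis .
  qed
  show ?thesis using main unfolding eq .
qed

definition N1d :: "real \<Rightarrow> real \<Rightarrow> real" where "N1d x y = (x+5/3)*(x+1)*(x+1/3)*(y+x+1/3)*(y+x+1)"
definition D1d :: "real \<Rightarrow> real \<Rightarrow> real" where "D1d x y = (4*(x+1/2))*(y+2*x+3)*(y+2*x+7/3)*(y+2*x+4/3)*(y+2*x+2)"
definition N2d :: "real \<Rightarrow> real \<Rightarrow> real" where "N2d x y = (y+x+1/3)*(y+x+1)"
definition D2d :: "real \<Rightarrow> real \<Rightarrow> real" where "D2d x y = (y+2*x+4/3)*(y+2*x+2)"
definition NRd :: "real \<Rightarrow> real \<Rightarrow> real" where "NRd x y = y^3 + (13/2*x+9/2)*y^2 + (14*x^2+59/3*x+59/9)*y + (21/2*x^3+137/6*x^2+283/18*x+61/18)"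
definition DRd :: "real \<Rightarrow> real \<Rightarrow> real" where "DRd x y = (2*x+1)*(y+2*x+4/3)*(y+2*x+2)"
definition Kd :: "real \<Rightarrow> real" where "Kd x = 1 + (13/2*x+9/2) + (14*x^2+59/3*x+59/9) + (21/2*x^3+137/6*x^2+283/18*x+61/18)"
definition Npd :: "real \<Rightarrow> real" where "Npd x = 24*(3*x+2)*(2*x+1)"
definition Dpd :: "real \<Rightarrow> real" where "Dpd x = 1"
definition Nsd :: "real \<Rightarrow> real" where "Nsd x = (x+1/3)^2*(x+1)"
definition Dsd :: "real \<Rightarrow> real" where "Dsd x = (x+7/6)*(x+3/2)^2*64"
definition Nrd :: "real \<Rightarrow> real" where "Nrd x = 189*x^2+222*x+61"
definition Drd :: "real \<Rightarrow> real" where "Drd x = 1"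
definition Pd :: "nat \<Rightarrow> real" where "Pd n = (pochhammer (1/3) n ^ 2 * pochhammer 1 n) / (pochhammer (7/6) n * pochhammer (3/2) n ^ 2) / 64 ^ n"

lemma d_Dpos:
  assumes "0 \<le> x" "0 \<le> y"
  shows "0 < D1d x y" "0 < D2d x y" "0 < DRd x y" "0 < Dpd x" "0 < Dsd x" "0 < Drd x"
  unfolding D1d_def D2d_def DRd_def Dpd_def Dsd_def Drd_def
  by ((intro mult_pos_pos zero_less_power)?; use assms in \<open>(simp only: ring_distribs)?; linarith\<close>)+

lemma d_Dnz:
  assumes "0 \<le> x" "0 \<le> y"
  shows "D1d x y \<noteq> 0" "D2d x y \<noteq> 0" "DRd x y \<noteq> 0" "Dpd x \<noteq> 0" "Dsd x \<noteq> 0" "Drd x \<noteq> 0"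
  using d_Dpos[OF assms] by simp_all

lemma d_wz: "0 \<le> x \<Longrightarrow> 0 \<le> y \<Longrightarrow>
    1 - N1d x y / D1d x y = NRd x y / DRd x y - N2d x y / D2d x y * (NRd x (y+1) / DRd x (y+1))"
proof -
  assume a: "0 \<le> x" "0 \<le> y"
  have p: "(D1d x y - N1d x y) * (DRd x y * (D2d x y * DRd x (y+1))) = (NRd x y * (D2d x y * DRd x (y+1)) - N2d x y * NRd x (y+1) * DRd x y) * D1d x y"
    unfolding N1d_def D1d_def N2d_def D2d_def NRd_def DRd_def by algebra
  have a1: "0 \<le> y + 1" using a by simp
  show ?thesis by (rule wz_frac[OF d_Dnz(1)[OF a] d_Dnz(3)[OF a] d_Dnz(2)[OF a] d_Dnz(3)[OF a(1) a1] p])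
qed

lemma d_compat: "0 \<le> x \<Longrightarrow> 0 \<le> y \<Longrightarrow>
    N2d x y / D2d x y * (N1d x (y+1) / D1d x (y+1)) = N1d x y / D1d x y * (N2d (x+1) y / D2d (x+1) y)"
proof -
  assume a: "0 \<le> x" "0 \<le> y"
  have p: "N2d x y * N1d x (y+1) * (D1d x y * D2d (x+1) y) = N1d x y * N2d (x+1) y * (D2d x y * D1d x (y+1))"
    unfolding N1d_def D1d_def N2d_def D2d_def by algebra
  have a1: "0 \<le> y + 1" "0 \<le> x + 1" using a by simp_all
  show ?thesis by (rule compat_frac[OF d_Dnz(2)[OF a] d_Dnz(1)[OF a(1) a1(1)] d_Dnz(1)[OF a] d_Dnz(2)[OF a1(2) a(2)] p])
qed

lemma d_base: "0 \<le> y \<Longrightarrow> N2d 0 y / D2d 0 y = (3*y+1)*(y+1)/((3*y+4)*(y+2))"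
proof -
  assume a: "0 \<le> y"
  have p: "N2d 0 y * ((3*y+4)*(y+2)) = (3*y+1)*(y+1) * D2d 0 y"
    unfolding N2d_def D2d_def by algebra
  have nz: "(3*y+4)*(y+2) \<noteq> 0" using a by simp
  show ?thesis by (rule eqfrac[OF d_Dnz(2)[of 0 y] nz p]) (use a in simp_all)
qed

lemma d_phi: "0 \<le> x \<Longrightarrow>
    Npd x / Dpd x * (N1d x 0 / D1d x 0) = Npd (x+1) / Dpd (x+1) * (Nsd x / Dsd x)"
proof -
  assume a: "0 \<le> x"
  have z: "0 \<le> (0::real)" "0 \<le> x + 1" using a by simp_all
  have p: "Npd x * N1d x 0 * (Dpd (x+1) * Dsd x) = Npd (x+1) * Nsd x * (Dpd x * D1d x 0)"
    unfolding N1d_def D1d_def Npd_def Dpd_def Nsd_def Dsd_def by algebra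
  show ?thesis by (rule compat_frac[OF d_Dnz(4)[OF a z(1)] d_Dnz(1)[OF a z(1)] d_Dnz(4)[OF z(2) z(1)] d_Dnz(5)[OF a z(1)] p])
qed

lemma d_rat: "0 \<le> x \<Longrightarrow> Npd x / Dpd x * (NRd x 0 / DRd x 0) = Nrd x / Drd x"
proof -
  assume a: "0 \<le> x"
  have z: "0 \<le> (0::real)" by simp
  have p: "(Npd x * NRd x 0) * Drd x = Nrd x * (Dpd x * DRd x 0)"
    unfolding NRd_def DRd_def Npd_def Dpd_def Nrd_def Drd_def by (simp add: power2_eq_square; algebra)
  have "Npd x / Dpd x * (NRd x 0 / DRd x 0) = (Npd x * NRd x 0) / (Dpd x * DRd x 0)" by simp
  also have "\<dots> = Nrd x / Drd x"
    by (rule eqfrac[OF _ d_Dnz(6)[OF a z] p]) (use d_Dnz[OF a z] in simp)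
  finally show ?thesis .
qed

lemma d_q: "0 \<le> x \<Longrightarrow> 0 \<le> y \<Longrightarrow> \<bar>N1d x y / D1d x y\<bar> \<le> 5/6"
  unfolding N1d_def D1d_def by (rule q5_bound; (simp only: ring_distribs)?; linarith)

lemma d_R: "0 \<le> x \<Longrightarrow> 0 \<le> y \<Longrightarrow> \<bar>NRd x y / DRd x y\<bar> \<le> Kd x * (y+1)"
  unfolding NRd_def DRd_def Kd_def
  by (rule cubic_R_bound; ((intro add_nonneg_nonneg mult_nonneg_nonneg zero_le_power; simp)?; (simp only: ring_distribs)?; linarith))

lemma d_P: "Pd (Suc n) = Pd n * (Nsd (real n) / Dsd (real n))"
proof -
  have nz: "pochhammer (7/6::real) n \<noteq> 0" "pochhammer (3/2::real) n \<noteq> 0" "pochhammer (1/3::real) n \<noteq> 0" "pochhammer (1::real) n \<noteq> 0" "(64::real) ^ n \<noteq> 0" "real n + 7/6 \<noteq> (0::real)" "7/6 + real n \<noteq> (0::real)" "real n + 3/2 \<noteq> (0::real)" "3/2 + real n \<noteq> (0::real)" "real n + 1/3 \<noteq> (0::real)" "1/3 + real n \<noteq> (0::real)" "real n + 1 \<noteq> (0::real)" "1 + real n \<noteq> (0::real)"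
    by (simp_all add: pochhammer_eq_0_iff) (use pochhammer_pos in linarith)?
  show ?thesis unfolding Pd_def Nsd_def Dsd_def
    using nz by (simp add: pochhammer_rec' divide_simps algebra_simps power2_eq_square)
qed

lemma d_sums: "(\<lambda>n::nat. (189 * real n ^ 2 + 222 * real n + 61) * (pochhammer (1/3) n ^ 2 * pochhammer 1 n) / (pochhammer (7/6) n * pochhammer (3/2) n ^ 2) / 64 ^ n) sums (48 * (pi * sqrt 3 / 12 + 3 / 4 * ln 3))"
proof -
  have main: "(\<lambda>n. Fz 48 (\<lambda>x y. N1d x y / D1d x y) n 0 * (NRd (real n) 0 / DRd (real n) 0)) sums (48 * (pi * sqrt 3 / 12 + 3 / 4 * ln 3))"
    by (rule wz_main[where ra = "\<lambda>x y. N1d x y / D1d x y" and rb = "\<lambda>x y. N2d x y / D2d x y"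
          and R = "\<lambda>x y. NRd x y / DRd x y" and q = "5/6" and K = Kd, OF d_wz d_compat d_base d_q _ _ d_R])
       simp_all
  have cl: "Fz 48 (\<lambda>x y. N1d x y / D1d x y) n 0 = Npd (real n) / Dpd (real n) * Pd n" for n
    by (rule Fz_closed[where ph = "\<lambda>x. Npd x / Dpd x" and sg = "\<lambda>x. Nsd x / Dsd x"
          and P = Pd and ra = "\<lambda>x y. N1d x y / D1d x y", OF d_phi _ d_P])
       (simp_all add: Npd_def Dpd_def Pd_def)
  have eq: "Fz 48 (\<lambda>x y. N1d x y / D1d x y) n 0 * (NRd (real n) 0 / DRd (real n) 0) = (189 * real n ^ 2 + 222 * real n + 61) * (pochhammer (1/3) n ^ 2 * pochhammer 1 n) / (pochhammer (7/6) n * pochhammer (3/2) n ^ 2) / 64 ^ n" for n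
  proof -
    have "Fz 48 (\<lambda>x y. N1d x y / D1d x y) n 0 * (NRd (real n) 0 / DRd (real n) 0)
        = (Npd (real n) / Dpd (real n) * (NRd (real n) 0 / DRd (real n) 0)) * Pd n"
      unfolding cl by (simp only: ac_simps)
    also have "\<dots> = Nrd (real n) / Drd (real n) * Pd n"
      using d_rat[of "real n"] by simp
    also have "\<dots> = (189 * real n ^ 2 + 222 * real n + 61) * (pochhammer (1/3) n ^ 2 * pochhammer 1 n) / (pochhammer (7/6) n * pochhammer (3/2) n ^ 2) / 64 ^ n"
      unfolding Nrd_def Drd_def Pd_def by simp
    finally show ?thesis .
  qed
  show ?thesis using main unfolding eq .
qed

definition N1e :: "real \<Rightarrow> real \<Rightarrow> real" where "N1e x y = -((x+5/3)*(y+x+1/3)*(y+2*x+1))"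
definition D1e :: "real \<Rightarrow> real \<Rightarrow> real" where "D1e x y = (y+2*x+7/3)*(y+2*x+4/3)*(y+2*x+3)"
definition N2e :: "real \<Rightarrow> real \<Rightarrow> real" where "N2e x y = (y+x+1/3)*(y+2*x+1)"
definition D2e :: "real \<Rightarrow> real \<Rightarrow> real" where "D2e x y = (y+2*x+4/3)*(y+2*x+2)"
definition NRe :: "real \<Rightarrow> real \<Rightarrow> real" where "NRe x y = y^3 + (7*x+16/3)*y^2 + (15*x^2+22*x+23/3)*y + (10*x^3+65/3*x^2+46/3*x+11/3)"
definition DRe :: "real \<Rightarrow> real \<Rightarrow> real" where "DRe x y = (x+1)*(y+2*x+4/3)*(y+2*x+2)"
definition Ke :: "real \<Rightarrow> real" where "Ke x = 1 + (7*x+16/3) + (15*x^2+22*x+23/3) + (10*x^3+65/3*x^2+46/3*x+11/3)"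
definition Npe :: "real \<Rightarrow> real" where "Npe x = 12*x+8"
definition Dpe :: "real \<Rightarrow> real" where "Dpe x = 2*x+1"
definition Nse :: "real \<Rightarrow> real" where "Nse x = -(x+1/3)"
definition Dse :: "real \<Rightarrow> real" where "Dse x = (x+7/6)*4"
definition Nre :: "real \<Rightarrow> real" where "Nre x = 30*x^2+35*x+11"
definition Dre :: "real \<Rightarrow> real" where "Dre x = (1+2*x)*(1+x)"
definition Pe :: "nat \<Rightarrow> real" where "Pe n = pochhammer (1/3) n / pochhammer (7/6) n / (-4) ^ n"

lemma e_Dpos:
  assumes "0 \<le> x" "0 \<le> y"
  shows "0 < D1e x y" "0 < D2e x y" "0 < DRe x y" "0 < Dpe x" "0 < Dse x" "0 < Dre x"
  unfolding D1e_def D2e_def DRe_def Dpe_def Dse_def Dre_def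
  by ((intro mult_pos_pos zero_less_power)?; use assms in \<open>(simp only: ring_distribs)?; linarith\<close>)+

lemma e_Dnz:
  assumes "0 \<le> x" "0 \<le> y"
  shows "D1e x y \<noteq> 0" "D2e x y \<noteq> 0" "DRe x y \<noteq> 0" "Dpe x \<noteq> 0" "Dse x \<noteq> 0" "Dre x \<noteq> 0"
  using e_Dpos[OF assms] by simp_all

lemma e_wz: "0 \<le> x \<Longrightarrow> 0 \<le> y \<Longrightarrow>
    1 - N1e x y / D1e x y = NRe x y / DRe x y - N2e x y / D2e x y * (NRe x (y+1) / DRe x (y+1))"
proof -
  assume a: "0 \<le> x" "0 \<le> y"
  have p: "(D1e x y - N1e x y) * (DRe x y * (D2e x y * DRe x (y+1))) = (NRe x y * (D2e x y * DRe x (y+1)) - N2e x y * NRe x (y+1) * DRe x y) * D1e x y"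
    unfolding N1e_def D1e_def N2e_def D2e_def NRe_def DRe_def by algebra
  have a1: "0 \<le> y + 1" using a by simp
  show ?thesis by (rule wz_frac[OF e_Dnz(1)[OF a] e_Dnz(3)[OF a] e_Dnz(2)[OF a] e_Dnz(3)[OF a(1) a1] p])
qed

lemma e_compat: "0 \<le> x \<Longrightarrow> 0 \<le> y \<Longrightarrow>
    N2e x y / D2e x y * (N1e x (y+1) / D1e x (y+1)) = N1e x y / D1e x y * (N2e (x+1) y / D2e (x+1) y)"
proof -
  assume a: "0 \<le> x" "0 \<le> y"
  have p: "N2e x y * N1e x (y+1) * (D1e x y * D2e (x+1) y) = N1e x y * N2e (x+1) y * (D2e x y * D1e x (y+1))"
    unfolding N1e_def D1e_def N2e_def D2e_def by algebra
  have a1: "0 \<le> y + 1" "0 \<le> x + 1" using a by simp_all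
  show ?thesis by (rule compat_frac[OF e_Dnz(2)[OF a] e_Dnz(1)[OF a(1) a1(1)] e_Dnz(1)[OF a] e_Dnz(2)[OF a1(2) a(2)] p])
qed

lemma e_base: "0 \<le> y \<Longrightarrow> N2e 0 y / D2e 0 y = (3*y+1)*(y+1)/((3*y+4)*(y+2))"
proof -
  assume a: "0 \<le> y"
  have p: "N2e 0 y * ((3*y+4)*(y+2)) = (3*y+1)*(y+1) * D2e 0 y"
    unfolding N2e_def D2e_def by algebra
  have nz: "(3*y+4)*(y+2) \<noteq> 0" using a by simp
  show ?thesis by (rule eqfrac[OF e_Dnz(2)[of 0 y] nz p]) (use a in simp_all)
qed

lemma e_phi: "0 \<le> x \<Longrightarrow>
    Npe x / Dpe x * (N1e x 0 / D1e x 0) = Npe (x+1) / Dpe (x+1) * (Nse x / Dse x)"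
proof -
  assume a: "0 \<le> x"
  have z: "0 \<le> (0::real)" "0 \<le> x + 1" using a by simp_all
  have p: "Npe x * N1e x 0 * (Dpe (x+1) * Dse x) = Npe (x+1) * Nse x * (Dpe x * D1e x 0)"
    unfolding N1e_def D1e_def Npe_def Dpe_def Nse_def Dse_def by algebra
  show ?thesis by (rule compat_frac[OF e_Dnz(4)[OF a z(1)] e_Dnz(1)[OF a z(1)] e_Dnz(4)[OF z(2) z(1)] e_Dnz(5)[OF a z(1)] p])
qed

lemma e_rat: "0 \<le> x \<Longrightarrow> Npe x / Dpe x * (NRe x 0 / DRe x 0) = Nre x / Dre x"
proof -
  assume a: "0 \<le> x"
  have z: "0 \<le> (0::real)" by simp
  have p: "(Npe x * NRe x 0) * Dre x = Nre x * (Dpe x * DRe x 0)"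
    unfolding NRe_def DRe_def Npe_def Dpe_def Nre_def Dre_def by (simp add: power2_eq_square; algebra)
  have "Npe x / Dpe x * (NRe x 0 / DRe x 0) = (Npe x * NRe x 0) / (Dpe x * DRe x 0)" by simp
  also have "\<dots> = Nre x / Dre x"
    by (rule eqfrac[OF _ e_Dnz(6)[OF a z] p]) (use e_Dnz[OF a z] in simp)
  finally show ?thesis .
qed

lemma e_q: "0 \<le> x \<Longrightarrow> 0 \<le> y \<Longrightarrow> \<bar>N1e x y / D1e x y\<bar> \<le> 5/7"
  unfolding N1e_def D1e_def by (rule q3_bound(2); (simp only: ring_distribs)?; linarith)

lemma e_R: "0 \<le> x \<Longrightarrow> 0 \<le> y \<Longrightarrow> \<bar>NRe x y / DRe x y\<bar> \<le> Ke x * (y+1)"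
  unfolding NRe_def DRe_def Ke_def
  by (rule cubic_R_bound; ((intro add_nonneg_nonneg mult_nonneg_nonneg zero_le_power; simp)?; (simp only: ring_distribs)?; linarith))

lemma e_P: "Pe (Suc n) = Pe n * (Nse (real n) / Dse (real n))"
proof -
  have nz: "pochhammer (7/6::real) n \<noteq> 0" "pochhammer (1/3::real) n \<noteq> 0" "(-4::real) ^ n \<noteq> 0" "real n + 7/6 \<noteq> (0::real)" "7/6 + real n \<noteq> (0::real)" "real n + 1/3 \<noteq> (0::real)" "1/3 + real n \<noteq> (0::real)"
    by (simp_all add: pochhammer_eq_0_iff) (use pochhammer_pos in linarith)?
  show ?thesis unfolding Pe_def Nse_def Dse_def
    using nz by (simp add: pochhammer_rec' divide_simps algebra_simps power2_eq_square)
qed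

lemma e_sums: "(\<lambda>n::nat. (30 * real n ^ 2 + 35 * real n + 11) / ((1 + 2 * real n) * (1 + real n)) * pochhammer (1/3) n / pochhammer (7/6) n / (-4) ^ n) sums (8 * (pi * sqrt 3 / 12 + 3 / 4 * ln 3))"
proof -
  have main: "(\<lambda>n. Fz 8 (\<lambda>x y. N1e x y / D1e x y) n 0 * (NRe (real n) 0 / DRe (real n) 0)) sums (8 * (pi * sqrt 3 / 12 + 3 / 4 * ln 3))"
    by (rule wz_main[where ra = "\<lambda>x y. N1e x y / D1e x y" and rb = "\<lambda>x y. N2e x y / D2e x y"
          and R = "\<lambda>x y. NRe x y / DRe x y" and q = "5/7" and K = Ke, OF e_wz e_compat e_base e_q _ _ e_R])
       simp_all
  have cl: "Fz 8 (\<lambda>x y. N1e x y / D1e x y) n 0 = Npe (real n) / Dpe (real n) * Pe n" for n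
    by (rule Fz_closed[where ph = "\<lambda>x. Npe x / Dpe x" and sg = "\<lambda>x. Nse x / Dse x"
          and P = Pe and ra = "\<lambda>x y. N1e x y / D1e x y", OF e_phi _ e_P])
       (simp_all add: Npe_def Dpe_def Pe_def)
  have eq: "Fz 8 (\<lambda>x y. N1e x y / D1e x y) n 0 * (NRe (real n) 0 / DRe (real n) 0) = (30 * real n ^ 2 + 35 * real n + 11) / ((1 + 2 * real n) * (1 + real n)) * pochhammer (1/3) n / pochhammer (7/6) n / (-4) ^ n" for n
  proof -
    have "Fz 8 (\<lambda>x y. N1e x y / D1e x y) n 0 * (NRe (real n) 0 / DRe (real n) 0)
        = (Npe (real n) / Dpe (real n) * (NRe (real n) 0 / DRe (real n) 0)) * Pe n"
      unfolding cl by (simp only: ac_simps)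
    also have "\<dots> = Nre (real n) / Dre (real n) * Pe n"
      using e_rat[of "real n"] by simp
    also have "\<dots> = (30 * real n ^ 2 + 35 * real n + 11) / ((1 + 2 * real n) * (1 + real n)) * pochhammer (1/3) n / pochhammer (7/6) n / (-4) ^ n"
      unfolding Nre_def Dre_def Pe_def by simp
    finally show ?thesis .
  qed
  show ?thesis using main unfolding eq .
qed

definition N1f :: "real \<Rightarrow> real \<Rightarrow> real" where "N1f x y = -((x+1/3)*(y+2*x+1/3)*(y+x+1))"
definition D1f :: "real \<Rightarrow> real \<Rightarrow> real" where "D1f x y = (y+2*x+3)*(y+2*x+7/3)*(y+2*x+2)"
definition N2f :: "real \<Rightarrow> real \<Rightarrow> real" where "N2f x y = (y+2*x+1/3)*(y+x+1)"
definition D2f :: "real \<Rightarrow> real \<Rightarrow> real" where "D2f x y = (y+2*x+4/3)*(y+2*x+2)"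
definition NRf :: "real \<Rightarrow> real \<Rightarrow> real" where "NRf x y = y^3 + (7*x+14/3)*y^2 + (15*x^2+62/3*x+61/9)*y + (10*x^3+67/3*x^2+142/9*x+31/9)"
definition DRf :: "real \<Rightarrow> real \<Rightarrow> real" where "DRf x y = (x+1)*(y+2*x+4/3)*(y+2*x+2)"
definition Kf :: "real \<Rightarrow> real" where "Kf x = 1 + (7*x+14/3) + (15*x^2+62/3*x+61/9) + (10*x^3+67/3*x^2+142/9*x+31/9)"
definition Npf :: "real \<Rightarrow> real" where "Npf x = 12"
definition Dpf :: "real \<Rightarrow> real" where "Dpf x = 1+6*x"
definition Nsf :: "real \<Rightarrow> real" where "Nsf x = -(x+1/3)"
definition Dsf :: "real \<Rightarrow> real" where "Dsf x = (x+3/2)*4"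
definition Nrf :: "real \<Rightarrow> real" where "Nrf x = 90*x^2+111*x+31"
definition Drf :: "real \<Rightarrow> real" where "Drf x = (1+6*x)*(2+3*x)*(1+x)"
definition Pf :: "nat \<Rightarrow> real" where "Pf n = pochhammer (1/3) n / pochhammer (3/2) n / (-4) ^ n"

lemma f_Dpos:
  assumes "0 \<le> x" "0 \<le> y"
  shows "0 < D1f x y" "0 < D2f x y" "0 < DRf x y" "0 < Dpf x" "0 < Dsf x" "0 < Drf x"
  unfolding D1f_def D2f_def DRf_def Dpf_def Dsf_def Drf_def
  by ((intro mult_pos_pos zero_less_power)?; use assms in \<open>(simp only: ring_distribs)?; linarith\<close>)+

lemma f_Dnz:
  assumes "0 \<le> x" "0 \<le> y"
  shows "D1f x y \<noteq> 0" "D2f x y \<noteq> 0" "DRf x y \<noteq> 0" "Dpf x \<noteq> 0" "Dsf x \<noteq> 0" "Drf x \<noteq> 0"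
  using f_Dpos[OF assms] by simp_all

lemma f_wz: "0 \<le> x \<Longrightarrow> 0 \<le> y \<Longrightarrow>
    1 - N1f x y / D1f x y = NRf x y / DRf x y - N2f x y / D2f x y * (NRf x (y+1) / DRf x (y+1))"
proof -
  assume a: "0 \<le> x" "0 \<le> y"
  have p: "(D1f x y - N1f x y) * (DRf x y * (D2f x y * DRf x (y+1))) = (NRf x y * (D2f x y * DRf x (y+1)) - N2f x y * NRf x (y+1) * DRf x y) * D1f x y"
    unfolding N1f_def D1f_def N2f_def D2f_def NRf_def DRf_def by algebra
  have a1: "0 \<le> y + 1" using a by simp
  show ?thesis by (rule wz_frac[OF f_Dnz(1)[OF a] f_Dnz(3)[OF a] f_Dnz(2)[OF a] f_Dnz(3)[OF a(1) a1] p])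
qed

lemma f_compat: "0 \<le> x \<Longrightarrow> 0 \<le> y \<Longrightarrow>
    N2f x y / D2f x y * (N1f x (y+1) / D1f x (y+1)) = N1f x y / D1f x y * (N2f (x+1) y / D2f (x+1) y)"
proof -
  assume a: "0 \<le> x" "0 \<le> y"
  have p: "N2f x y * N1f x (y+1) * (D1f x y * D2f (x+1) y) = N1f x y * N2f (x+1) y * (D2f x y * D1f x (y+1))"
    unfolding N1f_def D1f_def N2f_def D2f_def by algebra
  have a1: "0 \<le> y + 1" "0 \<le> x + 1" using a by simp_all
  show ?thesis by (rule compat_frac[OF f_Dnz(2)[OF a] f_Dnz(1)[OF a(1) a1(1)] f_Dnz(1)[OF a] f_Dnz(2)[OF a1(2) a(2)] p])
qed

lemma f_base: "0 \<le> y \<Longrightarrow> N2f 0 y / D2f 0 y = (3*y+1)*(y+1)/((3*y+4)*(y+2))"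
proof -
  assume a: "0 \<le> y"
  have p: "N2f 0 y * ((3*y+4)*(y+2)) = (3*y+1)*(y+1) * D2f 0 y"
    unfolding N2f_def D2f_def by algebra
  have nz: "(3*y+4)*(y+2) \<noteq> 0" using a by simp
  show ?thesis by (rule eqfrac[OF f_Dnz(2)[of 0 y] nz p]) (use a in simp_all)
qed

lemma f_phi: "0 \<le> x \<Longrightarrow>
    Npf x / Dpf x * (N1f x 0 / D1f x 0) = Npf (x+1) / Dpf (x+1) * (Nsf x / Dsf x)"
proof -
  assume a: "0 \<le> x"
  have z: "0 \<le> (0::real)" "0 \<le> x + 1" using a by simp_all
  have p: "Npf x * N1f x 0 * (Dpf (x+1) * Dsf x) = Npf (x+1) * Nsf x * (Dpf x * D1f x 0)"
    unfolding N1f_def D1f_def Npf_def Dpf_def Nsf_def Dsf_def by algebra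
  show ?thesis by (rule compat_frac[OF f_Dnz(4)[OF a z(1)] f_Dnz(1)[OF a z(1)] f_Dnz(4)[OF z(2) z(1)] f_Dnz(5)[OF a z(1)] p])
qed

lemma f_rat: "0 \<le> x \<Longrightarrow> Npf x / Dpf x * (NRf x 0 / DRf x 0) = Nrf x / Drf x"
proof -
  assume a: "0 \<le> x"
  have z: "0 \<le> (0::real)" by simp
  have p: "(Npf x * NRf x 0) * Drf x = Nrf x * (Dpf x * DRf x 0)"
    unfolding NRf_def DRf_def Npf_def Dpf_def Nrf_def Drf_def by (simp add: power2_eq_square; algebra)
  have "Npf x / Dpf x * (NRf x 0 / DRf x 0) = (Npf x * NRf x 0) / (Dpf x * DRf x 0)" by simp
  also have "\<dots> = Nrf x / Drf x"
    by (rule eqfrac[OF _ f_Dnz(6)[OF a z] p]) (use f_Dnz[OF a z] in simp)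
  finally show ?thesis .
qed

lemma f_q: "0 \<le> x \<Longrightarrow> 0 \<le> y \<Longrightarrow> \<bar>N1f x y / D1f x y\<bar> \<le> 1/2"
  unfolding N1f_def D1f_def by (rule q3_bound(2); (simp only: ring_distribs)?; linarith)

lemma f_R: "0 \<le> x \<Longrightarrow> 0 \<le> y \<Longrightarrow> \<bar>NRf x y / DRf x y\<bar> \<le> Kf x * (y+1)"
  unfolding NRf_def DRf_def Kf_def
  by (rule cubic_R_bound; ((intro add_nonneg_nonneg mult_nonneg_nonneg zero_le_power; simp)?; (simp only: ring_distribs)?; linarith))

lemma f_P: "Pf (Suc n) = Pf n * (Nsf (real n) / Dsf (real n))"
proof -
  have nz: "pochhammer (3/2::real) n \<noteq> 0" "pochhammer (1/3::real) n \<noteq> 0" "(-4::real) ^ n \<noteq> 0" "real n + 3/2 \<noteq> (0::real)" "3/2 + real n \<noteq> (0::real)" "real n + 1/3 \<noteq> (0::real)" "1/3 + real n \<noteq> (0::real)"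
    by (simp_all add: pochhammer_eq_0_iff) (use pochhammer_pos in linarith)?
  show ?thesis unfolding Pf_def Nsf_def Dsf_def
    using nz by (simp add: pochhammer_rec' divide_simps algebra_simps power2_eq_square)
qed

lemma f_sums: "(\<lambda>n::nat. (90 * real n ^ 2 + 111 * real n + 31) / ((1 + 6 * real n) * (2 + 3 * real n) * (1 + real n)) * pochhammer (1/3) n / pochhammer (3/2) n / (-4) ^ n) sums (12 * (pi * sqrt 3 / 12 + 3 / 4 * ln 3))"
proof -
  have main: "(\<lambda>n. Fz 12 (\<lambda>x y. N1f x y / D1f x y) n 0 * (NRf (real n) 0 / DRf (real n) 0)) sums (12 * (pi * sqrt 3 / 12 + 3 / 4 * ln 3))"
    by (rule wz_main[where ra = "\<lambda>x y. N1f x y / D1f x y" and rb = "\<lambda>x y. N2f x y / D2f x y"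
          and R = "\<lambda>x y. NRf x y / DRf x y" and q = "1/2" and K = Kf, OF f_wz f_compat f_base f_q _ _ f_R])
       simp_all
  have cl: "Fz 12 (\<lambda>x y. N1f x y / D1f x y) n 0 = Npf (real n) / Dpf (real n) * Pf n" for n
    by (rule Fz_closed[where ph = "\<lambda>x. Npf x / Dpf x" and sg = "\<lambda>x. Nsf x / Dsf x"
          and P = Pf and ra = "\<lambda>x y. N1f x y / D1f x y", OF f_phi _ f_P])
       (simp_all add: Npf_def Dpf_def Pf_def)
  have eq: "Fz 12 (\<lambda>x y. N1f x y / D1f x y) n 0 * (NRf (real n) 0 / DRf (real n) 0) = (90 * real n ^ 2 + 111 * real n + 31) / ((1 + 6 * real n) * (2 + 3 * real n) * (1 + real n)) * pochhammer (1/3) n / pochhammer (3/2) n / (-4) ^ n" for n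
  proof -
    have "Fz 12 (\<lambda>x y. N1f x y / D1f x y) n 0 * (NRf (real n) 0 / DRf (real n) 0)
        = (Npf (real n) / Dpf (real n) * (NRf (real n) 0 / DRf (real n) 0)) * Pf n"
      unfolding cl by (simp only: ac_simps)
    also have "\<dots> = Nrf (real n) / Drf (real n) * Pf n"
      using f_rat[of "real n"] by simp
    also have "\<dots> = (90 * real n ^ 2 + 111 * real n + 31) / ((1 + 6 * real n) * (2 + 3 * real n) * (1 + real n)) * pochhammer (1/3) n / pochhammer (3/2) n / (-4) ^ n"
      unfolding Nrf_def Drf_def Pf_def by simp
    finally show ?thesis .
  qed
  show ?thesis using main unfolding eq .
qed

theorem proposition3p1:
  fixes S0 :: real
  defines "S0 \<equiv> pi * sqrt 3 / 12 + 3 / 4 * ln 3"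
  shows "(\<lambda>k::nat. 1 / ((3 * real k + 1) * (real k + 1))) sums S0 \<and>
       (\<lambda>n::nat. (9 * real n + 7) / ((real n + 1) * (3 * real n + 1))
            * pochhammer (5/3) n / pochhammer (3/2) n / 4 ^ n) sums (6 * S0) \<and>
       (\<lambda>n::nat. (9 * real n + 5) / (real n + 1)
            * pochhammer (1/3) n ^ 2 / (pochhammer (5/3) n * pochhammer (7/6) n) / 4 ^ n)
           sums (4 * S0) \<and>
       (\<lambda>n::nat. (189 * real n ^ 2 + 222 * real n + 61)
            * (pochhammer (1/3) n ^ 2 * pochhammer 1 n)
            / (pochhammer (7/6) n * pochhammer (3/2) n ^ 2) / 64 ^ n) sums (48 * S0) \<and>
       (\<lambda>n::nat. (30 * real n ^ 2 + 35 * real n + 11) / ((1 + 2 * real n) * (1 + real n))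
            * pochhammer (1/3) n / pochhammer (7/6) n / (-4) ^ n) sums (8 * S0) \<and>
       (\<lambda>n::nat. (90 * real n ^ 2 + 111 * real n + 31)
            / ((1 + 6 * real n) * (2 + 3 * real n) * (1 + real n))
            * pochhammer (1/3) n / pochhammer (3/2) n / (-4) ^ n) sums (12 * S0)"
proof -
  have e: "S0 = pi * sqrt 3 / 12 + 3 / 4 * ln 3" unfolding S0_def by simp
  show ?thesis unfolding e
    using S0_sums b_sums c_sums d_sums e_sums f_sums by blast
qed

end
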